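(* For a read-once Boolean function $f$ the following are equivalent: (1) $f$ is linear read-once; (2) $f$ is a Chow function; (3) no restriction of $f$ equals, up to renaming of variables, $g_1(x,y,z,u)=(x\vee y)\wedge(z\vee u)$, $g_2(x,y,z,u)=(x\wedge y)\vee(z\wedge u)$, or any function obtained from $g_1$ or $g_2$ by negating some of its variables.
   Context: Read-once: representable by a formula over $\wedge,\vee,\neg$ in which every variable appears at most once. Linear read-once (lro): constant, or representable by a nested formula, where literals $x,\overline{x}$ are nested and $x\vee t$, $x\wedge t$, $\overline{x}\vee t$, $\overline{x}\wedge t$ are nested whenever $t$ is nested and contains neither $x$ nor $\overline{x}$. Chow parameters of $f(x_1,\ldots,x_n)$: $(w_1(f),\ldots,w_n(f),w(f))$, with $w(f)$ the number of true points and $w_i(f)$ the number of true points with $x_i=1$; $f$ is Chow if no other function of the same variables has the same Chow parameters. A restriction of $f$ is obtained by fixing some variables to constants. *)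

theory Defs
  imports Main
begin

datatype 'n formula =
    FConst bool
  | FVar 'n
  | FNeg "'n formula"
  | FAnd "'n formula" "'n formula"
  | FOr "'n formula" "'n formula"

primrec eval :: "'n formula \<Rightarrow> ('n \<Rightarrow> bool) \<Rightarrow> bool" where
  "eval (FConst b) p = b"
| "eval (FVar x) p = p x"
| "eval (FNeg t) p = (\<not> eval t p)"
| "eval (FAnd s t) p = (eval s p \<and> eval t p)"
| "eval (FOr s t) p = (eval s p \<or> eval t p)"

primrec var_occs :: "'n formula \<Rightarrow> 'n list" where
  "var_occs (FConst b) = []"
| "var_occs (FVar x) = [x]"
| "var_occs (FNeg t) = var_occs t"
| "var_occs (FAnd s t) = var_occs s @ var_occs t"
| "var_occs (FOr s t) = var_occs s @ var_occs t"

definition read_once :: "(('n \<Rightarrow> bool) \<Rightarrow> bool) \<Rightarrow> bool" where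
  "read_once f \<longleftrightarrow> (\<exists>\<phi>. distinct (var_occs \<phi>) \<and> (\<forall>p. eval \<phi> p = f p))"

inductive nested :: "'n formula \<Rightarrow> bool" where
  lit_pos: "nested (FVar x)"
| lit_neg: "nested (FNeg (FVar x))"
| or_pos: "nested t \<Longrightarrow> x \<notin> set (var_occs t) \<Longrightarrow> nested (FOr (FVar x) t)"
| and_pos: "nested t \<Longrightarrow> x \<notin> set (var_occs t) \<Longrightarrow> nested (FAnd (FVar x) t)"
| or_neg: "nested t \<Longrightarrow> x \<notin> set (var_occs t) \<Longrightarrow> nested (FOr (FNeg (FVar x)) t)"
| and_neg: "nested t \<Longrightarrow> x \<notin> set (var_occs t) \<Longrightarrow> nested (FAnd (FNeg (FVar x)) t)"

definition linear_read_once :: "(('n \<Rightarrow> bool) \<Rightarrow> bool) \<Rightarrow> bool" where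
  "linear_read_once f \<longleftrightarrow>
     (\<exists>c. \<forall>p. f p = c) \<or> (\<exists>\<phi>. nested \<phi> \<and> (\<forall>p. eval \<phi> p = f p))"

definition chow_w :: "(('n \<Rightarrow> bool) \<Rightarrow> bool) \<Rightarrow> nat" where
  "chow_w f = card {p. f p}"

definition chow_wi :: "(('n \<Rightarrow> bool) \<Rightarrow> bool) \<Rightarrow> 'n \<Rightarrow> nat" where
  "chow_wi f i = card {p. f p \<and> p i}"

definition chow :: "(('n::finite \<Rightarrow> bool) \<Rightarrow> bool) \<Rightarrow> bool" where
  "chow f \<longleftrightarrow> (\<forall>g. chow_w g = chow_w f \<and> (\<forall>i. chow_wi g i = chow_wi f i) \<longrightarrow> g = f)"

definition g1 :: "bool \<Rightarrow> bool \<Rightarrow> bool \<Rightarrow> bool \<Rightarrow> bool" where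
  "g1 x y z u = ((x \<or> y) \<and> (z \<or> u))"

definition g2 :: "bool \<Rightarrow> bool \<Rightarrow> bool \<Rightarrow> bool \<Rightarrow> bool" where
  "g2 x y z u = ((x \<and> y) \<or> (z \<and> u))"

definition restricts_to :: "(('n \<Rightarrow> bool) \<Rightarrow> bool) \<Rightarrow> (bool \<Rightarrow> bool \<Rightarrow> bool \<Rightarrow> bool \<Rightarrow> bool) \<Rightarrow> bool" where
  "restricts_to f g \<longleftrightarrow> (\<exists>a b c d \<rho>. distinct [a, b, c, d] \<and>
      (\<forall>x y z u. f (\<rho>(a := x, b := y, c := z, d := u)) = g x y z u))"

text \<open>g1/g2 with some variables negated: variable x is negated iff its flag s is True.\<close>
definition forbidden_restriction :: "(('n \<Rightarrow> bool) \<Rightarrow> bool) \<Rightarrow> bool" where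
  "forbidden_restriction f \<longleftrightarrow> (\<exists>s1 s2 s3 s4.
      restricts_to f (\<lambda>x y z u. g1 (x \<noteq> s1) (y \<noteq> s2) (z \<noteq> s3) (u \<noteq> s4)) \<or>
      restricts_to f (\<lambda>x y z u. g2 (x \<noteq> s1) (y \<noteq> s2) (z \<noteq> s3) (u \<noteq> s4)))"

end

theory Submission
  imports Defs
begin



definition ind :: "bool \<Rightarrow> int" where "ind b = (if b then 1 else 0)"

lemma card_ind:
  fixes P :: "'a::finite \<Rightarrow> bool"
  shows "int (card {p. P p}) = (\<Sum>p\<in>UNIV. ind (P p))"
  by (simp add: ind_def sum.If_cases)

definition lin :: "int \<Rightarrow> ('n::finite \<Rightarrow> int) \<Rightarrow> ('n \<Rightarrow> bool) \<Rightarrow> int" where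
  "lin c a p = c + (\<Sum>i\<in>UNIV. a i * ind (p i))"

lemma lin_upd: "lin c (\<lambda>i. a i + (if i = x then K else 0)) p = lin c a p + K * ind (p x)"
proof -
  have "(\<Sum>i\<in>UNIV. (a i + (if i = x then K else 0)) * ind (p i))
      = (\<Sum>i\<in>UNIV. a i * ind (p i)) + (\<Sum>i\<in>UNIV. (if i = x then K * ind (p x) else 0))"
  proof -
    have "(\<Sum>i\<in>UNIV. (a i + (if i = x then K else 0)) * ind (p i))
       = (\<Sum>i\<in>UNIV. a i * ind (p i) + (if i = x then K * ind (p x) else 0))"
      by (rule sum.cong) (auto simp: distrib_right)
    then show ?thesis by (simp add: sum.distrib)
  qed
  then show ?thesis by (simp add: lin_def)
qed

lemma lin_zero: "lin c (\<lambda>i. 0) p = c" by (simp add: lin_def)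

definition thr :: "(('n::finite \<Rightarrow> bool) \<Rightarrow> bool) \<Rightarrow> bool" where
  "thr f \<longleftrightarrow> (\<exists>c a. \<forall>p. lin c a p \<noteq> 0 \<and> (f p \<longleftrightarrow> lin c a p > 0))"

lemma thr_chow:
  fixes f :: "('n::finite \<Rightarrow> bool) \<Rightarrow> bool"
  assumes "thr f" shows "chow f"
  unfolding chow_def
proof (intro allI impI)
  fix g :: "('n \<Rightarrow> bool) \<Rightarrow> bool"
  assume h: "chow_w g = chow_w f \<and> (\<forall>i. chow_wi g i = chow_wi f i)"
  obtain c a where ca: "\<And>p. lin c a p \<noteq> 0 \<and> (f p \<longleftrightarrow> lin c a p > 0)"
    using assms unfolding thr_def by blast
  define d where "d p = ind (f p) - ind (g p)" for p
  have s0: "(\<Sum>p\<in>UNIV. d p) = 0"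
  proof -
    have "int (card {p. f p}) = int (card {p. g p})" using h by (simp add: chow_w_def)
    then show ?thesis unfolding card_ind d_def by (simp add: sum_subtractf)
  qed
  have si: "(\<Sum>p\<in>UNIV. d p * ind (p i)) = 0" for i
  proof -
    have "int (card {p. f p \<and> p i}) = int (card {p. g p \<and> p i})" using h by (simp add: chow_wi_def)
    moreover have "ind (P \<and> Q) = ind P * ind Q" for P Q by (simp add: ind_def)
    ultimately show ?thesis unfolding card_ind d_def by (simp add: sum_subtractf left_diff_distrib)
  qed
  have "(\<Sum>p\<in>UNIV. d p * lin c a p) = c * (\<Sum>p\<in>UNIV. d p) + (\<Sum>i\<in>UNIV. a i * (\<Sum>p\<in>UNIV. d p * ind (p i)))"
  proof -
    have "(\<Sum>p\<in>UNIV. d p * lin c a p) = (\<Sum>p\<in>UNIV. c * d p + (\<Sum>i\<in>UNIV. a i * (d p * ind (p i))))"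
      unfolding lin_def by (rule sum.cong) (auto simp: distrib_left sum_distrib_left mult.commute mult.left_commute)
    also have "\<dots> = c * (\<Sum>p\<in>UNIV. d p) + (\<Sum>p\<in>UNIV. \<Sum>i\<in>UNIV. a i * (d p * ind (p i)))"
      by (simp add: sum.distrib sum_distrib_left)
    also have "(\<Sum>p\<in>UNIV. \<Sum>i\<in>UNIV. a i * (d p * ind (p i))) = (\<Sum>i\<in>UNIV. \<Sum>p\<in>UNIV. a i * (d p * ind (p i)))"
      by (rule sum.swap)
    also have "\<dots> = (\<Sum>i\<in>UNIV. a i * (\<Sum>p\<in>UNIV. d p * ind (p i)))"
      by (simp add: sum_distrib_left)
    finally show ?thesis .
  qed
  also have "\<dots> = 0" using s0 si by simp
  finally have S: "(\<Sum>p\<in>UNIV. d p * lin c a p) = 0" .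
  have nn: "\<forall>p\<in>UNIV. 0 \<le> d p * lin c a p"
  proof
    fix p
    show "0 \<le> d p * lin c a p" using ca[of p]
      by (cases "f p"; cases "g p") (auto simp: d_def ind_def)
  qed
  have "\<forall>p\<in>UNIV. d p * lin c a p = 0" using sum_nonneg_eq_0_iff[of UNIV "\<lambda>p. d p * lin c a p"] nn S by simp
  then show "g = f"
  proof -
    assume z: "\<forall>p\<in>UNIV. d p * lin c a p = 0"
    show "g = f"
    proof
      fix p have "d p * lin c a p = 0" using z by simp
      then show "g p = f p" using ca[of p] by (cases "f p"; cases "g p") (auto simp: d_def ind_def)
    qed
  qed
qed



definition lit :: "'n \<Rightarrow> bool \<Rightarrow> 'n formula" where
  "lit x s = (if s then FNeg (FVar x) else FVar x)"

lemma eval_lit[simp]: "eval (lit x s) p = (p x \<noteq> s)" by (simp add: lit_def)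
lemma vars_lit[simp]: "var_occs (lit x s) = [x]" by (simp add: lit_def)
lemma nested_lit: "nested (lit x s)" by (simp add: lit_def nested.intros)
lemma nested_or_lit: "nested t \<Longrightarrow> x \<notin> set (var_occs t) \<Longrightarrow> nested (FOr (lit x s) t)"
  by (simp add: lit_def nested.intros)
lemma nested_and_lit: "nested t \<Longrightarrow> x \<notin> set (var_occs t) \<Longrightarrow> nested (FAnd (lit x s) t)"
  by (simp add: lit_def nested.intros)

lemma nested_induct'[consumes 1, case_names Lit Or And]:
  assumes "nested \<phi>"
    and "\<And>x s. P (lit x s)"
    and "\<And>x s t. nested t \<Longrightarrow> x \<notin> set (var_occs t) \<Longrightarrow> P t \<Longrightarrow> P (FOr (lit x s) t)"
    and "\<And>x s t. nested t \<Longrightarrow> x \<notin> set (var_occs t) \<Longrightarrow> P t \<Longrightarrow> P (FAnd (lit x s) t)"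
  shows "P \<phi>"
  using assms(1)
proof (induction rule: nested.induct)
  case (lit_pos x) then show ?case using assms(2)[of x False] by (simp add: lit_def)
next
  case (lit_neg x) then show ?case using assms(2)[of x True] by (simp add: lit_def)
next
  case (or_pos t x) then show ?case using assms(3)[of t x False] by (simp add: lit_def)
next
  case (and_pos t x) then show ?case using assms(4)[of t x False] by (simp add: lit_def)
next
  case (or_neg t x) then show ?case using assms(3)[of t x True] by (simp add: lit_def)
next
  case (and_neg t x) then show ?case using assms(4)[of t x True] by (simp add: lit_def)
qed

lemma eval_dep: "(\<forall>i\<in>set (var_occs \<phi>). p i = q i) \<Longrightarrow> eval \<phi> p = eval \<phi> q"
  by (induction \<phi>) auto

lemma ind_simps[simp]: "ind True = 1" "ind False = 0" by (simp_all add: ind_def)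

lemma nested_thr:
  fixes \<phi> :: "'n::finite formula"
  assumes "nested \<phi>" shows "thr (eval \<phi>)"
  using assms
proof (induction rule: nested_induct')
  case (Lit x s)
  show ?case
  proof (cases s)
    case True
    have "lin 1 (\<lambda>i. 0 + (if i = x then -2 else 0)) p = 1 - 2 * ind (p x)" for p
      by (subst lin_upd) (simp add: lin_zero)
    then show ?thesis unfolding thr_def using True
      by (intro exI[of _ 1] exI[of _ "\<lambda>i. 0 + (if i = x then -2 else 0)"]) (auto simp: ind_def)
  next
    case False
    have "lin (-1) (\<lambda>i. 0 + (if i = x then 2 else 0)) p = 2 * ind (p x) - 1" for p
      by (subst lin_upd) (simp add: lin_zero)
    then show ?thesis unfolding thr_def using False
      by (intro exI[of _ "-1"] exI[of _ "\<lambda>i. 0 + (if i = x then 2 else 0)"]) (auto simp: ind_def)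
  qed
next
  case (Or x s t)
  obtain c a where ca: "\<And>p. lin c a p \<noteq> 0 \<and> (eval t p \<longleftrightarrow> lin c a p > 0)"
    using Or.IH unfolding thr_def by blast
  define K where "K = 1 + (\<Sum>p\<in>UNIV. \<bar>lin c a p\<bar>)"
  have Kb: "\<bar>lin c a p\<bar> < K" for p
  proof -
    have "\<bar>lin c a p\<bar> \<le> (\<Sum>p\<in>UNIV. \<bar>lin c a p\<bar>)"
      by (rule member_le_sum) auto
    then show ?thesis unfolding K_def by simp
  qed
  show ?case
  proof (cases s)
    case True
    have "lin (c + K) (\<lambda>i. a i + (if i = x then -K else 0)) p = lin c a p + K - K * ind (p x)" for p
      by (subst lin_upd) (simp add: lin_def)
    note L = this
    show ?thesis unfolding thr_def
    proof (intro exI[of _ "c + K"] exI[of _ "\<lambda>i. a i + (if i = x then -K else 0)"] allI)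
      fix p
      show "lin (c + K) (\<lambda>i. a i + (if i = x then -K else 0)) p \<noteq> 0 \<and> (eval (FOr (lit x s) t) p \<longleftrightarrow> lin (c + K) (\<lambda>i. a i + (if i = x then -K else 0)) p > 0)"
        using L[of p] ca[of p] Kb[of p] True by (cases "p x") (auto simp: abs_less_iff ind_def)
    qed
  next
    case False
    have "lin c (\<lambda>i. a i + (if i = x then K else 0)) p = lin c a p + K * ind (p x)" for p
      by (subst lin_upd) simp
    note L = this
    show ?thesis unfolding thr_def
    proof (intro exI[of _ "c"] exI[of _ "\<lambda>i. a i + (if i = x then K else 0)"] allI)
      fix p
      show "lin (c) (\<lambda>i. a i + (if i = x then K else 0)) p \<noteq> 0 \<and> (eval (FOr (lit x s) t) p \<longleftrightarrow> lin (c) (\<lambda>i. a i + (if i = x then K else 0)) p > 0)"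
        using L[of p] ca[of p] Kb[of p] False by (cases "p x") (auto simp: abs_less_iff ind_def)
    qed
  qed
next
  case (And x s t)
  obtain c a where ca: "\<And>p. lin c a p \<noteq> 0 \<and> (eval t p \<longleftrightarrow> lin c a p > 0)"
    using And.IH unfolding thr_def by blast
  define K where "K = 1 + (\<Sum>p\<in>UNIV. \<bar>lin c a p\<bar>)"
  have Kb: "\<bar>lin c a p\<bar> < K" for p
  proof -
    have "\<bar>lin c a p\<bar> \<le> (\<Sum>p\<in>UNIV. \<bar>lin c a p\<bar>)"
      by (rule member_le_sum) auto
    then show ?thesis unfolding K_def by simp
  qed
  show ?case
  proof (cases s)
    case True
    have "lin c (\<lambda>i. a i + (if i = x then -K else 0)) p = lin c a p - K * ind (p x)" for p
      by (subst lin_upd) simp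
    note L = this
    show ?thesis unfolding thr_def
    proof (intro exI[of _ "c"] exI[of _ "\<lambda>i. a i + (if i = x then -K else 0)"] allI)
      fix p
      show "lin (c) (\<lambda>i. a i + (if i = x then -K else 0)) p \<noteq> 0 \<and> (eval (FAnd (lit x s) t) p \<longleftrightarrow> lin (c) (\<lambda>i. a i + (if i = x then -K else 0)) p > 0)"
        using L[of p] ca[of p] Kb[of p] True by (cases "p x") (auto simp: abs_less_iff ind_def)
    qed
  next
    case False
    have "lin (c - K) (\<lambda>i. a i + (if i = x then K else 0)) p = lin c a p - K + K * ind (p x)" for p
      by (subst lin_upd) (simp add: lin_def)
    note L = this
    show ?thesis unfolding thr_def
    proof (intro exI[of _ "c - K"] exI[of _ "\<lambda>i. a i + (if i = x then K else 0)"] allI)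
      fix p
      show "lin (c - K) (\<lambda>i. a i + (if i = x then K else 0)) p \<noteq> 0 \<and> (eval (FAnd (lit x s) t) p \<longleftrightarrow> lin (c - K) (\<lambda>i. a i + (if i = x then K else 0)) p > 0)"
        using L[of p] ca[of p] Kb[of p] False by (cases "p x") (auto simp: abs_less_iff ind_def)
    qed
  qed
qed

lemma lro_chow:
  fixes f :: "('n::finite \<Rightarrow> bool) \<Rightarrow> bool"
  assumes "linear_read_once f" shows "chow f"
proof -
  have "thr f"
  proof (cases "\<exists>c. \<forall>p. f p = c")
    case True
    then obtain c where c: "\<And>p. f p = c" by blast
    show ?thesis unfolding thr_def
      by (intro exI[of _ "if c then 1 else -1"] exI[of _ "\<lambda>i. 0"]) (simp add: lin_zero c)
  next
    case False
    then obtain \<phi> where "nested \<phi>" "\<And>p. eval \<phi> p = f p" using assms unfolding linear_read_once_def by blast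
    moreover have "eval \<phi> = f" using \<open>\<And>p. eval \<phi> p = f p\<close> by (rule ext)
    ultimately show ?thesis using nested_thr[of \<phi>] by simp
  qed
  then show ?thesis by (rule thr_chow)
qed



lemma swap_not_chow:
  fixes f :: "('n::finite \<Rightarrow> bool) \<Rightarrow> bool"
  assumes fA: "f A" and fB: "f B" and fC: "\<not> f C" and fD: "\<not> f D"
    and AB: "A \<noteq> B" and CD: "C \<noteq> D"
    and bal: "\<And>i. (A i = C i \<and> B i = D i) \<or> (A i = D i \<and> B i = C i)"
  shows "\<not> chow f"
proof
  assume ch: "chow f"
  define g where "g p = ((f p \<and> p \<noteq> A \<and> p \<noteq> B) \<or> p = C \<or> p = D)" for p
  have AC: "A \<noteq> C" "A \<noteq> D" "B \<noteq> C" "B \<noteq> D" using fA fB fC fD by auto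
  have key: "(\<Sum>p\<in>UNIV. ind (g p) * h p) = (\<Sum>p\<in>UNIV. ind (f p) * h p) - h A - h B + h C + h D" for h
  proof -
    have "(\<Sum>p\<in>UNIV. ind (g p) * h p) = (\<Sum>p\<in>UNIV. ind (f p) * h p - (if p = A then h A else 0)
        - (if p = B then h B else 0) + (if p = C then h C else 0) + (if p = D then h D else 0))"
      by (rule sum.cong) (use fA fB fC fD AB CD AC in \<open>auto simp: g_def ind_def\<close>)
    then show ?thesis by (simp add: sum.distrib sum_subtractf)
  qed
  have "chow_w g = chow_w f"
  proof -
    have "int (card {p. g p}) = int (card {p. f p})"
      using key[of "\<lambda>_. 1"] unfolding card_ind by simp
    then show ?thesis by (simp add: chow_w_def)
  qed
  moreover have "chow_wi g i = chow_wi f i" for i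
  proof -
    have e: "ind (P \<and> Q) = ind P * ind Q" for P Q by (simp add: ind_def)
    have "ind (A i) + ind (B i) = ind (C i) + ind (D i)" using bal[of i] by auto
    then have "int (card {p. g p \<and> p i}) = int (card {p. f p \<and> p i})"
      using key[of "\<lambda>p. ind (p i)"] unfolding card_ind e by simp
    then show ?thesis by (simp add: chow_wi_def)
  qed
  ultimately have "g = f" using ch unfolding chow_def by blast
  moreover have "\<not> g A" using AC AB by (simp add: g_def)
  ultimately show False using fA by simp
qed

lemma restr_not_chow:
  fixes f :: "('n::finite \<Rightarrow> bool) \<Rightarrow> bool"
  assumes dist: "distinct [a, b, c, d]"
    and hh: "(\<forall>x y z u. f (\<rho>(a := x, b := y, c := z, d := u)) = g1 (x \<noteq> s1) (y \<noteq> s2) (z \<noteq> s3) (u \<noteq> s4))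
      \<or> (\<forall>x y z u. f (\<rho>(a := x, b := y, c := z, d := u)) = g2 (x \<noteq> s1) (y \<noteq> s2) (z \<noteq> s3) (u \<noteq> s4))"
  shows "\<not> chow f"
proof -
  define pt where "pt x y z u = \<rho>(a := x, b := y, c := z, d := u)" for x y z u
  define A where "A = pt (\<not>s1) s2 (\<not>s3) s4"
  define B where "B = pt s1 (\<not>s2) s3 (\<not>s4)"
  define C where "C = pt (\<not>s1) (\<not>s2) s3 s4"
  define D where "D = pt s1 s2 (\<not>s3) (\<not>s4)"
  have ptv: "pt x y z u a = x" "pt x y z u b = y" "pt x y z u c = z" "pt x y z u d = u" for x y z u
    using dist by (simp_all add: pt_def)
  have AB: "A \<noteq> B"
  proof
    assume "A = B" then have "A a = B a" by simp
    then show False unfolding A_def B_def ptv by simp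
  qed
  have CD: "C \<noteq> D"
  proof
    assume "C = D" then have "C a = D a" by simp
    then show False unfolding C_def D_def ptv by simp
  qed
  have pto: "i \<notin> {a, b, c, d} \<Longrightarrow> pt x y z u i = \<rho> i" for x y z u i
    by (simp add: pt_def)
  have bal: "(A i = C i \<and> B i = D i) \<or> (A i = D i \<and> B i = C i)" for i
  proof -
    consider "i = a" | "i = b" | "i = c" | "i = d" | "i \<notin> {a, b, c, d}" by blast
    then show ?thesis
    proof cases
      case 1 then show ?thesis unfolding A_def B_def C_def D_def using ptv by simp
    next
      case 2 then show ?thesis unfolding A_def B_def C_def D_def using ptv by simp
    next
      case 3 then show ?thesis unfolding A_def B_def C_def D_def using ptv by simp
    next
      case 4 then show ?thesis unfolding A_def B_def C_def D_def using ptv by simp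
    next
      case 5 then show ?thesis unfolding A_def B_def C_def D_def using pto[OF 5] by simp
    qed
  qed
  have bal': "(C i = A i \<and> D i = B i) \<or> (C i = B i \<and> D i = A i)" for i
    using bal[of i] by auto
  from hh show ?thesis
  proof
    assume H: "\<forall>x y z u. f (\<rho>(a := x, b := y, c := z, d := u)) = g1 (x \<noteq> s1) (y \<noteq> s2) (z \<noteq> s3) (u \<noteq> s4)"
    have eA: "f A = g1 ((\<not>s1) \<noteq> s1) (s2 \<noteq> s2) ((\<not>s3) \<noteq> s3) (s4 \<noteq> s4)" unfolding A_def pt_def by (rule H[rule_format])
    have eB: "f B = g1 (s1 \<noteq> s1) ((\<not>s2) \<noteq> s2) (s3 \<noteq> s3) ((\<not>s4) \<noteq> s4)" unfolding B_def pt_def by (rule H[rule_format])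
    have eC: "f C = g1 ((\<not>s1) \<noteq> s1) ((\<not>s2) \<noteq> s2) (s3 \<noteq> s3) (s4 \<noteq> s4)" unfolding C_def pt_def by (rule H[rule_format])
    have eD: "f D = g1 (s1 \<noteq> s1) (s2 \<noteq> s2) ((\<not>s3) \<noteq> s3) ((\<not>s4) \<noteq> s4)" unfolding D_def pt_def by (rule H[rule_format])
    have fA: "f A" using eA by (simp add: g1_def)
    have fB: "f B" using eB by (simp add: g1_def)
    have fC: "\<not> f C" using eC by (simp add: g1_def)
    have fD: "\<not> f D" using eD by (simp add: g1_def)
    show ?thesis by (rule swap_not_chow[OF fA fB fC fD AB CD bal])
  next
    assume H: "\<forall>x y z u. f (\<rho>(a := x, b := y, c := z, d := u)) = g2 (x \<noteq> s1) (y \<noteq> s2) (z \<noteq> s3) (u \<noteq> s4)"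
    have eA: "f A = g2 ((\<not>s1) \<noteq> s1) (s2 \<noteq> s2) ((\<not>s3) \<noteq> s3) (s4 \<noteq> s4)" unfolding A_def pt_def by (rule H[rule_format])
    have eB: "f B = g2 (s1 \<noteq> s1) ((\<not>s2) \<noteq> s2) (s3 \<noteq> s3) ((\<not>s4) \<noteq> s4)" unfolding B_def pt_def by (rule H[rule_format])
    have eC: "f C = g2 ((\<not>s1) \<noteq> s1) ((\<not>s2) \<noteq> s2) (s3 \<noteq> s3) (s4 \<noteq> s4)" unfolding C_def pt_def by (rule H[rule_format])
    have eD: "f D = g2 (s1 \<noteq> s1) (s2 \<noteq> s2) ((\<not>s3) \<noteq> s3) ((\<not>s4) \<noteq> s4)" unfolding D_def pt_def by (rule H[rule_format])
    have fA: "\<not> f A" using eA by (simp add: g2_def)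
    have fB: "\<not> f B" using eB by (simp add: g2_def)
    have fC: "f C" using eC by (simp add: g2_def)
    have fD: "f D" using eD by (simp add: g2_def)
    show ?thesis by (rule swap_not_chow[OF fC fD fA fB CD AB bal'])
  qed
qed

lemma forbidden_not_chow:
  fixes f :: "('n::finite \<Rightarrow> bool) \<Rightarrow> bool"
  assumes "forbidden_restriction f" shows "\<not> chow f"
  using assms unfolding forbidden_restriction_def restricts_to_def
  apply (elim exE disjE conjE)
  subgoal for s1 s2 s3 s4 a b c d \<rho> by (rule restr_not_chow[of a b c d f \<rho> s1 s2 s3 s4]) simp_all
  subgoal for s1 s2 s3 s4 a b c d \<rho> by (rule restr_not_chow[of a b c d f \<rho> s1 s2 s3 s4]) simp_all
  done



definition dep :: "'n set \<Rightarrow> (('n \<Rightarrow> bool) \<Rightarrow> bool) \<Rightarrow> bool" where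
  "dep V f \<longleftrightarrow> (\<forall>p q. (\<forall>i\<in>V. p i = q i) \<longrightarrow> f p = f q)"

definition forb :: "'n set \<Rightarrow> (('n \<Rightarrow> bool) \<Rightarrow> bool) \<Rightarrow> bool" where
  "forb V f \<longleftrightarrow> (\<exists>a b c d \<rho> s1 s2 s3 s4. distinct [a, b, c, d] \<and> {a, b, c, d} \<subseteq> V \<and>
     ((\<forall>x y z u. f (\<rho>(a := x, b := y, c := z, d := u)) = g1 (x \<noteq> s1) (y \<noteq> s2) (z \<noteq> s3) (u \<noteq> s4)) \<or>
      (\<forall>x y z u. f (\<rho>(a := x, b := y, c := z, d := u)) = g2 (x \<noteq> s1) (y \<noteq> s2) (z \<noteq> s3) (u \<noteq> s4))))"

definition good :: "'n set \<Rightarrow> (('n \<Rightarrow> bool) \<Rightarrow> bool) \<Rightarrow> bool" where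
  "good V f \<longleftrightarrow> (\<exists>c. \<forall>p. f p = c) \<or> (\<exists>\<sigma>. nested \<sigma> \<and> set (var_occs \<sigma>) \<subseteq> V \<and> (\<forall>p. eval \<sigma> p = f p)) \<or> forb V f"

lemma forb_intro:
  assumes "distinct [a, b, c, d]" "{a, b, c, d} \<subseteq> V"
    "(\<forall>x y z u. f (\<rho>(a := x, b := y, c := z, d := u)) = g1 (x \<noteq> s1) (y \<noteq> s2) (z \<noteq> s3) (u \<noteq> s4)) \<or>
     (\<forall>x y z u. f (\<rho>(a := x, b := y, c := z, d := u)) = g2 (x \<noteq> s1) (y \<noteq> s2) (z \<noteq> s3) (u \<noteq> s4))"
  shows "forb V f"
  unfolding forb_def
  apply (rule exI[of _ a], rule exI[of _ b], rule exI[of _ c], rule exI[of _ d], rule exI[of _ \<rho>])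
  apply (rule exI[of _ "s1"], rule exI[of _ "s2"], rule exI[of _ "s3"], rule exI[of _ "s4"])
  using assms by (intro conjI)

lemma forb_elim:
  assumes "forb V f"
  obtains a b c d \<rho> s1 s2 s3 s4 where "distinct [a, b, c, d]" "{a, b, c, d} \<subseteq> V"
    "(\<forall>x y z u. f (\<rho>(a := x, b := y, c := z, d := u)) = g1 (x \<noteq> s1) (y \<noteq> s2) (z \<noteq> s3) (u \<noteq> s4)) \<or>
     (\<forall>x y z u. f (\<rho>(a := x, b := y, c := z, d := u)) = g2 (x \<noteq> s1) (y \<noteq> s2) (z \<noteq> s3) (u \<noteq> s4))"
  using assms unfolding forb_def by (elim exE conjE) (rule that)

lemma good_cases:
  assumes "good V f"
  obtains c where "\<forall>p. f p = c"
  | \<sigma> where "nested \<sigma>" "set (var_occs \<sigma>) \<subseteq> V" "\<forall>p. eval \<sigma> p = f p"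
  | "forb V f"
  using assms unfolding good_def by (elim disjE exE conjE) (rule that; assumption)+

lemma good_const: "\<forall>p. f p = c \<Longrightarrow> good V f" unfolding good_def by (rule disjI1, rule exI)
lemma good_nested: "nested \<sigma> \<Longrightarrow> set (var_occs \<sigma>) \<subseteq> V \<Longrightarrow> \<forall>p. eval \<sigma> p = f p \<Longrightarrow> good V f"
  unfolding good_def by (intro disjI2 disjI1 exI[of _ \<sigma>] conjI)
lemma good_forb: "forb V f \<Longrightarrow> good V f" unfolding good_def by (intro disjI2)

lemma dep_eval: "dep (set (var_occs \<phi>)) (eval \<phi>)"
  unfolding dep_def using eval_dep by blast

lemma forb_forbidden: assumes "forb V f" shows "forbidden_restriction f"
proof -
  obtain a b c d \<rho> s1 s2 s3 s4 where d: "distinct [a, b, c, d]" and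
    H: "(\<forall>x y z u. f (\<rho>(a := x, b := y, c := z, d := u)) = g1 (x \<noteq> s1) (y \<noteq> s2) (z \<noteq> s3) (u \<noteq> s4)) \<or>
     (\<forall>x y z u. f (\<rho>(a := x, b := y, c := z, d := u)) = g2 (x \<noteq> s1) (y \<noteq> s2) (z \<noteq> s3) (u \<noteq> s4))"
    using assms by (rule forb_elim)
  from H show ?thesis
  proof
    assume H1: "\<forall>x y z u. f (\<rho>(a := x, b := y, c := z, d := u)) = g1 (x \<noteq> s1) (y \<noteq> s2) (z \<noteq> s3) (u \<noteq> s4)"
    have "restricts_to f (\<lambda>x y z u. g1 (x \<noteq> s1) (y \<noteq> s2) (z \<noteq> s3) (u \<noteq> s4))"
      unfolding restricts_to_def
      apply (rule exI[of _ a], rule exI[of _ b], rule exI[of _ c], rule exI[of _ d], rule exI[of _ \<rho>])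
      using d H1 by (intro conjI)
    then show ?thesis unfolding forbidden_restriction_def
      apply (rule_tac x=s1 in exI, rule_tac x=s2 in exI, rule_tac x=s3 in exI, rule_tac x=s4 in exI)
      by (rule disjI1)
  next
    assume H1: "\<forall>x y z u. f (\<rho>(a := x, b := y, c := z, d := u)) = g2 (x \<noteq> s1) (y \<noteq> s2) (z \<noteq> s3) (u \<noteq> s4)"
    have "restricts_to f (\<lambda>x y z u. g2 (x \<noteq> s1) (y \<noteq> s2) (z \<noteq> s3) (u \<noteq> s4))"
      unfolding restricts_to_def
      apply (rule exI[of _ a], rule exI[of _ b], rule exI[of _ c], rule exI[of _ d], rule exI[of _ \<rho>])
      using d H1 by (intro conjI)
    then show ?thesis unfolding forbidden_restriction_def
      apply (rule_tac x=s1 in exI, rule_tac x=s2 in exI, rule_tac x=s3 in exI, rule_tac x=s4 in exI)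
      by (rule disjI2)
  qed
qed

lemma forb_mono: assumes "forb V f" "V \<subseteq> W" shows "forb W f"
proof -
  obtain a b c d \<rho> s1 s2 s3 s4 where d: "distinct [a, b, c, d]" "{a, b, c, d} \<subseteq> V" and
    H: "(\<forall>x y z u. f (\<rho>(a := x, b := y, c := z, d := u)) = g1 (x \<noteq> s1) (y \<noteq> s2) (z \<noteq> s3) (u \<noteq> s4)) \<or>
     (\<forall>x y z u. f (\<rho>(a := x, b := y, c := z, d := u)) = g2 (x \<noteq> s1) (y \<noteq> s2) (z \<noteq> s3) (u \<noteq> s4))"
    using assms(1) by (rule forb_elim)
  have W: "{a, b, c, d} \<subseteq> W" using d(2) assms(2) by (rule subset_trans)
  show ?thesis by (rule forb_intro[OF d(1) W H])
qed

lemma good_mono: assumes "good V f" "V \<subseteq> W" shows "good W f"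
  using assms(1)
proof (cases rule: good_cases)
  case (1 c) then show ?thesis by (rule good_const)
next
  case (2 \<sigma>) then show ?thesis using assms(2) by (intro good_nested[of \<sigma>]) auto
next
  case 3 then show ?thesis using assms(2) forb_mono good_forb by blast
qed

lemma forb_neg: "forb V f \<Longrightarrow> forb V (\<lambda>p. \<not> f p)"
  unfolding forb_def
proof (elim exE conjE disjE)
  fix a b c d \<rho> s1 s2 s3 s4
  assume d: "distinct [a, b, c, d]" "{a, b, c, d} \<subseteq> V"
    and H: "\<forall>x y z u. f (\<rho>(a := x, b := y, c := z, d := u)) = g1 (x \<noteq> s1) (y \<noteq> s2) (z \<noteq> s3) (u \<noteq> s4)"
  show "\<exists>a b c d \<rho> s1 s2 s3 s4. distinct [a, b, c, d] \<and> {a, b, c, d} \<subseteq> V \<and>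
     ((\<forall>x y z u. (\<not> f (\<rho>(a := x, b := y, c := z, d := u))) = g1 (x \<noteq> s1) (y \<noteq> s2) (z \<noteq> s3) (u \<noteq> s4)) \<or>
      (\<forall>x y z u. (\<not> f (\<rho>(a := x, b := y, c := z, d := u))) = g2 (x \<noteq> s1) (y \<noteq> s2) (z \<noteq> s3) (u \<noteq> s4)))"
    apply (rule exI[of _ a], rule exI[of _ b], rule exI[of _ c], rule exI[of _ d], rule exI[of _ \<rho>])
    apply (rule exI[of _ "\<not>s1"], rule exI[of _ "\<not>s2"], rule exI[of _ "\<not>s3"], rule exI[of _ "\<not>s4"])
  proof (intro conjI disjI2)
    show "distinct [a, b, c, d]" "{a, b, c, d} \<subseteq> V" using d by auto
    show "\<forall>x y z u. (\<not> f (\<rho>(a := x, b := y, c := z, d := u))) = g2 (x \<noteq> (\<not>s1)) (y \<noteq> (\<not>s2)) (z \<noteq> (\<not>s3)) (u \<noteq> (\<not>s4))"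
      using H by (simp add: g1_def g2_def)
  qed
next
  fix a b c d \<rho> s1 s2 s3 s4
  assume d: "distinct [a, b, c, d]" "{a, b, c, d} \<subseteq> V"
    and H: "\<forall>x y z u. f (\<rho>(a := x, b := y, c := z, d := u)) = g2 (x \<noteq> s1) (y \<noteq> s2) (z \<noteq> s3) (u \<noteq> s4)"
  show "\<exists>a b c d \<rho> s1 s2 s3 s4. distinct [a, b, c, d] \<and> {a, b, c, d} \<subseteq> V \<and>
     ((\<forall>x y z u. (\<not> f (\<rho>(a := x, b := y, c := z, d := u))) = g1 (x \<noteq> s1) (y \<noteq> s2) (z \<noteq> s3) (u \<noteq> s4)) \<or>
      (\<forall>x y z u. (\<not> f (\<rho>(a := x, b := y, c := z, d := u))) = g2 (x \<noteq> s1) (y \<noteq> s2) (z \<noteq> s3) (u \<noteq> s4)))"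
    apply (rule exI[of _ a], rule exI[of _ b], rule exI[of _ c], rule exI[of _ d], rule exI[of _ \<rho>])
    apply (rule exI[of _ "\<not>s1"], rule exI[of _ "\<not>s2"], rule exI[of _ "\<not>s3"], rule exI[of _ "\<not>s4"])
  proof (intro conjI disjI1)
    show "distinct [a, b, c, d]" "{a, b, c, d} \<subseteq> V" using d by auto
    show "\<forall>x y z u. (\<not> f (\<rho>(a := x, b := y, c := z, d := u))) = g1 (x \<noteq> (\<not>s1)) (y \<noteq> (\<not>s2)) (z \<noteq> (\<not>s3)) (u \<noteq> (\<not>s4))"
      using H by (simp add: g1_def g2_def)
  qed
qed

lemma nested_neg:
  assumes "nested \<sigma>"
  shows "\<exists>\<tau>. nested \<tau> \<and> set (var_occs \<tau>) = set (var_occs \<sigma>) \<and> (\<forall>p. eval \<tau> p = (\<not> eval \<sigma> p))"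
  using assms
proof (induction rule: nested_induct')
  case (Lit x s) show ?case by (intro exI[of _ "lit x (\<not>s)"]) (auto simp: nested_lit)
next
  case (Or x s t)
  then obtain \<tau> where "nested \<tau>" "set (var_occs \<tau>) = set (var_occs t)" "\<forall>p. eval \<tau> p = (\<not> eval t p)" by blast
  then show ?case using Or by (intro exI[of _ "FAnd (lit x (\<not>s)) \<tau>"]) (auto intro: nested_and_lit)
next
  case (And x s t)
  then obtain \<tau> where "nested \<tau>" "set (var_occs \<tau>) = set (var_occs t)" "\<forall>p. eval \<tau> p = (\<not> eval t p)" by blast
  then show ?case using And by (intro exI[of _ "FOr (lit x (\<not>s)) \<tau>"]) (auto intro: nested_or_lit)
qed

lemma good_neg: assumes "good V f" shows "good V (\<lambda>p. \<not> f p)"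
  using assms
proof (cases rule: good_cases)
  case (1 c) then show ?thesis by (intro good_const[of _ "\<not>c"]) simp
next
  case (2 \<sigma>)
  then obtain \<tau> where "nested \<tau>" "set (var_occs \<tau>) = set (var_occs \<sigma>)" "\<forall>p. eval \<tau> p = (\<not> eval \<sigma> p)"
    using nested_neg by blast
  then show ?thesis using 2 by (intro good_nested[of \<tau>]) auto
next
  case 3 then show ?thesis using forb_neg good_forb by blast
qed

lemma nested_witness:
  assumes "nested \<sigma>"
  shows "\<exists>y\<in>set (var_occs \<sigma>). \<exists>p s. \<forall>v. eval \<sigma> (p(y := v)) = (v \<noteq> s)"
  using assms
proof (induction rule: nested_induct')
  case (Lit x s) show ?case by auto
next
  case (Or x s t)
  then obtain y p s' where y: "y \<in> set (var_occs t)" and p: "\<forall>v. eval t (p(y := v)) = (v \<noteq> s')" by blast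
  have yx: "y \<noteq> x" using y Or by auto
  have W: "eval (FOr (lit x s) t) ((p(x := s))(y := v)) = (v \<noteq> s')" for v
  proof -
    have "eval t ((p(x := s))(y := v)) = eval t (p(y := v))"
      by (rule eval_dep) (use Or in auto)
    then show ?thesis using yx p by simp
  qed
  show ?case
  proof (rule bexI[of _ y])
    show "y \<in> set (var_occs (FOr (lit x s) t))" using y by simp
    show "\<exists>p s0. \<forall>v. eval (FOr (lit x s) t) (p(y := v)) = (v \<noteq> s0)"
      by (rule exI[of _ "p(x := s)"], rule exI[of _ s'], rule allI, rule W)
  qed
next
  case (And x s t)
  then obtain y p s' where y: "y \<in> set (var_occs t)" and p: "\<forall>v. eval t (p(y := v)) = (v \<noteq> s')" by blast
  have yx: "y \<noteq> x" using y And by auto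
  have W: "eval (FAnd (lit x s) t) ((p(x := \<not>s))(y := v)) = (v \<noteq> s')" for v
  proof -
    have "eval t ((p(x := \<not>s))(y := v)) = eval t (p(y := v))"
      by (rule eval_dep) (use And in auto)
    then show ?thesis using yx p by simp
  qed
  show ?case
  proof (rule bexI[of _ y])
    show "y \<in> set (var_occs (FAnd (lit x s) t))" using y by simp
    show "\<exists>p s0. \<forall>v. eval (FAnd (lit x s) t) (p(y := v)) = (v \<noteq> s0)"
      by (rule exI[of _ "p(x := \<not>s)"], rule exI[of _ s'], rule allI, rule W)
  qed
qed

lemma forb_and:
  assumes F: "forb V1 f1" and dis: "V1 \<inter> V2 = {}" and d1: "dep V1 f1" and d2: "dep V2 f2" and q: "f2 q"
  shows "forb (V1 \<union> V2) (\<lambda>p. f1 p \<and> f2 p)"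
proof -
  obtain a b c d \<rho> s1 s2 s3 s4 where dd: "distinct [a, b, c, d]" and sub: "{a, b, c, d} \<subseteq> V1" and
    H: "(\<forall>x y z u. f1 (\<rho>(a := x, b := y, c := z, d := u)) = g1 (x \<noteq> s1) (y \<noteq> s2) (z \<noteq> s3) (u \<noteq> s4)) \<or>
      (\<forall>x y z u. f1 (\<rho>(a := x, b := y, c := z, d := u)) = g2 (x \<noteq> s1) (y \<noteq> s2) (z \<noteq> s3) (u \<noteq> s4))"
    using F by (rule forb_elim)
  define \<rho>' where "\<rho>' i = (if i \<in> V2 then q i else \<rho> i)" for i
  have e1: "f1 (\<rho>'(a := x, b := y, c := z, d := u)) = f1 (\<rho>(a := x, b := y, c := z, d := u))" for x y z u
  proof -
    have "\<forall>i\<in>V1. (\<rho>'(a := x, b := y, c := z, d := u)) i = (\<rho>(a := x, b := y, c := z, d := u)) i"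
    proof
      fix i assume "i \<in> V1" then have "i \<notin> V2" using dis by blast
      then show "(\<rho>'(a := x, b := y, c := z, d := u)) i = (\<rho>(a := x, b := y, c := z, d := u)) i"
        by (simp add: \<rho>'_def)
    qed
    then show ?thesis using d1 unfolding dep_def by blast
  qed
  have e2: "f2 (\<rho>'(a := x, b := y, c := z, d := u))" for x y z u
  proof -
    have "f2 (\<rho>'(a := x, b := y, c := z, d := u)) = f2 q"
    proof -
      have "\<forall>i\<in>V2. (\<rho>'(a := x, b := y, c := z, d := u)) i = q i"
      proof
        fix i assume i: "i \<in> V2" then have "i \<noteq> a" "i \<noteq> b" "i \<noteq> c" "i \<noteq> d" using dis sub by blast+
        then show "(\<rho>'(a := x, b := y, c := z, d := u)) i = q i" using i by (simp add: \<rho>'_def)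
      qed
      then show ?thesis using d2 unfolding dep_def by blast
    qed
    then show ?thesis using q by simp
  qed
  show ?thesis unfolding forb_def
    apply (rule exI[of _ a], rule exI[of _ b], rule exI[of _ c], rule exI[of _ d], rule exI[of _ \<rho>'])
    apply (rule exI[of _ "s1"], rule exI[of _ "s2"], rule exI[of _ "s3"], rule exI[of _ "s4"])
  proof (intro conjI)
    show "distinct [a, b, c, d]" by (rule dd)
    show "{a, b, c, d} \<subseteq> V1 \<union> V2" using sub by blast
    show "(\<forall>x y z u. (f1 (\<rho>'(a := x, b := y, c := z, d := u)) \<and> f2 (\<rho>'(a := x, b := y, c := z, d := u))) = g1 (x \<noteq> s1) (y \<noteq> s2) (z \<noteq> s3) (u \<noteq> s4)) \<or>
      (\<forall>x y z u. (f1 (\<rho>'(a := x, b := y, c := z, d := u)) \<and> f2 (\<rho>'(a := x, b := y, c := z, d := u))) = g2 (x \<noteq> s1) (y \<noteq> s2) (z \<noteq> s3) (u \<noteq> s4))"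
      using H by (simp only: e1 e2 simp_thms)
  qed
qed

lemma lit_and:
  assumes G: "good V f" and D: "dep V f" and x: "x \<notin> V"
  shows "good (insert x V) (\<lambda>p. (p x \<noteq> s) \<and> f p)"
  using G
proof (cases rule: good_cases)
  case (1 c)
  show ?thesis
  proof (cases c)
    case True
    then show ?thesis using 1 nested_lit[of x s] by (intro good_nested[of "lit x s"]) auto
  next
    case False then show ?thesis using 1 by (intro good_const[of _ False]) auto
  qed
next
  case (2 \<sigma>)
  then show ?thesis using x by (intro good_nested[of "FAnd (lit x s) \<sigma>"]) (auto intro!: nested_and_lit)
next
  case 3
  then have "forb (V \<union> {x}) (\<lambda>p. f p \<and> (p x \<noteq> s))"
  proof (rule forb_and[where q = "\<lambda>_. \<not> s"])
    show "V \<inter> {x} = {}" using x by blast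
    show "dep V f" by (rule D)
    show "dep {x} (\<lambda>p. p x \<noteq> s)" by (simp add: dep_def)
  qed simp
  moreover have "(\<lambda>p. f p \<and> (p x \<noteq> s)) = (\<lambda>p. (p x \<noteq> s) \<and> f p)" by (rule ext) blast
  moreover have "V \<union> {x} = insert x V" by blast
  ultimately show ?thesis by (intro good_forb) simp
qed



lemma dep_and: "dep V1 f1 \<Longrightarrow> dep V2 f2 \<Longrightarrow> dep (V1 \<union> V2) (\<lambda>p. f1 p \<and> f2 p)"
  unfolding dep_def by (metis UnCI)

lemma core_or:
  assumes \<tau>: "nested \<tau>" and t: "nested t" and xt: "x \<notin> set (var_occs t)"
    and dis: "set (var_occs (FOr (lit x s) t)) \<inter> set (var_occs \<tau>) = {}"
  shows "good (set (var_occs (FOr (lit x s) t)) \<union> set (var_occs \<tau>)) (\<lambda>p. eval (FOr (lit x s) t) p \<and> eval \<tau> p)"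
  using \<tau> dis
proof (induction rule: nested_induct')
  case (Lit z r)
  let ?\<sigma> = "FOr (lit x s) t"
  have "nested ?\<sigma>" using t xt by (rule nested_or_lit)
  then have "nested (FAnd (lit z r) ?\<sigma>)" using Lit by (intro nested_and_lit) auto
  then show ?case
    by (intro good_nested[of "FAnd (lit z r) ?\<sigma>"]) auto
next
  case (And z r \<tau>')
  let ?\<sigma> = "FOr (lit x s) t"
  have g: "good (set (var_occs ?\<sigma>) \<union> set (var_occs \<tau>')) (\<lambda>p. eval ?\<sigma> p \<and> eval \<tau>' p)"
    using And by auto
  have dd: "dep (set (var_occs ?\<sigma>) \<union> set (var_occs \<tau>')) (\<lambda>p. eval ?\<sigma> p \<and> eval \<tau>' p)"
    by (rule dep_and[OF dep_eval dep_eval])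
  have "good (insert z (set (var_occs ?\<sigma>) \<union> set (var_occs \<tau>'))) (\<lambda>p. (p z \<noteq> r) \<and> (eval ?\<sigma> p \<and> eval \<tau>' p))"
    by (rule lit_and[OF g dd]) (use And in auto)
  moreover have "insert z (set (var_occs ?\<sigma>) \<union> set (var_occs \<tau>')) = set (var_occs ?\<sigma>) \<union> set (var_occs (FAnd (lit z r) \<tau>'))"
    by auto
  moreover have "(\<lambda>p. (p z \<noteq> r) \<and> (eval ?\<sigma> p \<and> eval \<tau>' p)) = (\<lambda>p. eval ?\<sigma> p \<and> eval (FAnd (lit z r) \<tau>') p)"
    by (rule ext) (simp only: eval.simps(4) eval_lit, blast)
  ultimately show ?case by simp
next
  case (Or z r \<tau>')
  obtain y p s2 where y: "y \<in> set (var_occs t)" and p: "\<forall>v. eval t (p(y := v)) = (v \<noteq> s2)"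
    using nested_witness[OF t] by blast
  obtain u q s4 where u: "u \<in> set (var_occs \<tau>')" and q: "\<forall>v. eval \<tau>' (q(u := v)) = (v \<noteq> s4)"
    using nested_witness[OF Or.hyps(1)] by blast
  let ?T = "set (var_occs (FOr (lit z r) \<tau>'))"
  let ?S = "set (var_occs (FOr (lit x s) t))"
  define \<rho> where "\<rho> i = (if i \<in> ?T then q i else p i)" for i
  have xy: "x \<noteq> y" using y xt by auto
  have zu: "z \<noteq> u" using u Or by auto
  have disj: "x \<notin> ?T" "y \<notin> ?T" "z \<notin> ?S" "u \<notin> ?S" using Or.prems y u by auto
  have dist: "distinct [x, y, z, u]" using xy zu disj y u by auto
  have "(eval (FOr (lit x s) t) (\<rho>(x := X, y := Y, z := Z, u := U)) \<and> eval (FOr (lit z r) \<tau>') (\<rho>(x := X, y := Y, z := Z, u := U)))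
     = g1 (X \<noteq> s) (Y \<noteq> s2) (Z \<noteq> r) (U \<noteq> s4)" for X Y Z U
  proof -
    have "eval t (\<rho>(x := X, y := Y, z := Z, u := U)) = eval t (p(y := Y))"
      by (rule eval_dep) (use disj xt xy Or.prems in \<open>auto simp: \<rho>_def\<close>)
    moreover have "eval \<tau>' (\<rho>(x := X, y := Y, z := Z, u := U)) = eval \<tau>' (q(u := U))"
      by (rule eval_dep) (use disj Or.hyps(2) zu Or.prems in \<open>auto simp: \<rho>_def\<close>)
    ultimately show ?thesis using p q dist by (simp add: g1_def)
  qed
  note G = this
  have S: "{x, y, z, u} \<subseteq> ?S \<union> ?T" using y u by auto
  have "forb (?S \<union> ?T) (\<lambda>p. eval (FOr (lit x s) t) p \<and> eval (FOr (lit z r) \<tau>') p)"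
    by (rule forb_intro[OF dist S], rule disjI1, use G in blast)
  then show ?case by (rule good_forb)
qed

lemma core:
  assumes "nested \<sigma>" "nested \<tau>" "set (var_occs \<sigma>) \<inter> set (var_occs \<tau>) = {}"
  shows "good (set (var_occs \<sigma>) \<union> set (var_occs \<tau>)) (\<lambda>p. eval \<sigma> p \<and> eval \<tau> p)"
  using assms
proof (induction arbitrary: \<tau> rule: nested_induct')
  case (Lit x s)
  then have "nested (FAnd (lit x s) \<tau>)" by (intro nested_and_lit) auto
  then show ?case
    by (intro good_nested[of "FAnd (lit x s) \<tau>"]) auto
next
  case (Or x s t)
  show ?case by (rule core_or) (use Or in auto)
next
  case (And x s t)
  have g: "good (set (var_occs t) \<union> set (var_occs \<tau>)) (\<lambda>p. eval t p \<and> eval \<tau> p)"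
    using And by auto
  have dd: "dep (set (var_occs t) \<union> set (var_occs \<tau>)) (\<lambda>p. eval t p \<and> eval \<tau> p)"
    by (rule dep_and[OF dep_eval dep_eval])
  have "good (insert x (set (var_occs t) \<union> set (var_occs \<tau>))) (\<lambda>p. (p x \<noteq> s) \<and> (eval t p \<and> eval \<tau> p))"
    by (rule lit_and[OF g dd]) (use And in auto)
  then show ?case by (simp add: conj_assoc)
qed

lemma good_and:
  assumes g1: "good V1 f1" and g2: "good V2 f2" and d1: "dep V1 f1" and d2: "dep V2 f2"
    and dis: "V1 \<inter> V2 = {}"
  shows "good (V1 \<union> V2) (\<lambda>p. f1 p \<and> f2 p)"
proof (cases "\<exists>c. \<forall>p. f1 p = c")
  case True
  then obtain c where c: "\<And>p. f1 p = c" by blast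
  show ?thesis
  proof (cases c)
    case True
    have "good (V1 \<union> V2) f2" using good_mono g2 by blast
    moreover have "(\<lambda>p. f1 p \<and> f2 p) = f2"
    proof
      fix p show "(f1 p \<and> f2 p) = f2 p" using c[of p] \<open>c\<close> by simp
    qed
    ultimately show ?thesis by simp
  next
    case False then show ?thesis using c by (intro good_const[of _ False]) simp
  qed
next
  case nc1: False
  show ?thesis
  proof (cases "\<exists>c. \<forall>p. f2 p = c")
    case True
    then obtain c where c: "\<And>p. f2 p = c" by blast
    show ?thesis
    proof (cases c)
      case True
      have "good (V1 \<union> V2) f1" using good_mono g1 by blast
      moreover have "(\<lambda>p. f1 p \<and> f2 p) = f1"
      proof
        fix p show "(f1 p \<and> f2 p) = f1 p" using c[of p] \<open>c\<close> by simp
      qed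
    ultimately show ?thesis by simp
    next
      case False then show ?thesis using c by (intro good_const[of _ False]) simp
    qed
  next
    case nc2: False
    obtain q1 where q1: "f1 q1" using nc1 by blast
    obtain q2 where q2: "f2 q2" using nc2 by blast
    show ?thesis
    proof (cases "forb V1 f1")
      case True
      then have "forb (V1 \<union> V2) (\<lambda>p. f1 p \<and> f2 p)" using forb_and dis d1 d2 q2 by blast
      then show ?thesis by (rule good_forb)
    next
      case F1: False
      show ?thesis
      proof (cases "forb V2 f2")
        case True
        then have "forb (V2 \<union> V1) (\<lambda>p. f2 p \<and> f1 p)" using forb_and dis d1 d2 q1 by blast
        moreover have "(\<lambda>p. f2 p \<and> f1 p) = (\<lambda>p. f1 p \<and> f2 p)" by auto
        moreover have "V2 \<union> V1 = V1 \<union> V2" by auto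
        ultimately show ?thesis using good_forb by metis
      next
        case F2: False
        obtain \<sigma> where \<sigma>: "nested \<sigma>" "set (var_occs \<sigma>) \<subseteq> V1" "\<And>p. eval \<sigma> p = f1 p"
          using g1 nc1 F1 by (cases rule: good_cases) blast+
        obtain \<tau> where \<tau>: "nested \<tau>" "set (var_occs \<tau>) \<subseteq> V2" "\<And>p. eval \<tau> p = f2 p"
          using g2 nc2 F2 by (cases rule: good_cases) blast+
        have "good (set (var_occs \<sigma>) \<union> set (var_occs \<tau>)) (\<lambda>p. eval \<sigma> p \<and> eval \<tau> p)"
          using core[OF \<sigma>(1) \<tau>(1)] \<sigma>(2) \<tau>(2) dis by blast
        then have "good (V1 \<union> V2) (\<lambda>p. eval \<sigma> p \<and> eval \<tau> p)"
          by (rule good_mono) (use \<sigma>(2) \<tau>(2) in auto)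
        then show ?thesis using \<sigma>(3) \<tau>(3) by simp
      qed
    qed
  qed
qed

lemma ro_good: "distinct (var_occs \<phi>) \<Longrightarrow> good (set (var_occs \<phi>)) (eval \<phi>)"
proof (induction \<phi>)
  case (FConst b) then show ?case by (intro good_const[of _ b]) simp
next
  case (FVar x)
  then show ?case
    by (intro good_nested[of "FVar x"]) (auto intro: nested.intros)
next
  case (FNeg t)
  then show ?case using good_neg[of "set (var_occs t)" "eval t"] by simp
next
  case (FAnd s t)
  have "good (set (var_occs s) \<union> set (var_occs t)) (\<lambda>p. eval s p \<and> eval t p)"
    by (rule good_and) (use FAnd in \<open>auto simp: dep_eval\<close>)
  then show ?case by simp
next
  case (FOr s t)
  have "good (set (var_occs s) \<union> set (var_occs t)) (\<lambda>p. \<not> eval s p \<and> \<not> eval t p)"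
  proof (rule good_and)
    show "good (set (var_occs s)) (\<lambda>p. \<not> eval s p)" using FOr by (intro good_neg) auto
    show "good (set (var_occs t)) (\<lambda>p. \<not> eval t p)" using FOr by (intro good_neg) auto
    show "dep (set (var_occs s)) (\<lambda>p. \<not> eval s p)" using dep_eval[of s] unfolding dep_def by blast
    show "dep (set (var_occs t)) (\<lambda>p. \<not> eval t p)" using dep_eval[of t] unfolding dep_def by blast
    show "set (var_occs s) \<inter> set (var_occs t) = {}" using FOr.prems by auto
  qed
  then have "good (set (var_occs s) \<union> set (var_occs t)) (\<lambda>p. \<not> (\<not> eval s p \<and> \<not> eval t p))"
    by (rule good_neg)
  then show ?case by simp
qed

theorem mainTheorem15:
  fixes f :: "('n::finite \<Rightarrow> bool) \<Rightarrow> bool"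
  assumes "read_once f"
  shows "(linear_read_once f \<longleftrightarrow> chow f) \<and> (chow f \<longleftrightarrow> \<not> forbidden_restriction f)"
proof -
  obtain \<phi> where \<phi>: "distinct (var_occs \<phi>)" "\<And>p. eval \<phi> p = f p"
    using assms unfolding read_once_def by blast
  have ef: "eval \<phi> = f" using \<phi>(2) by (rule ext)
  have g: "good (set (var_occs \<phi>)) f" using ro_good[OF \<phi>(1)] ef by simp
  have c: "\<not> forbidden_restriction f \<longrightarrow> linear_read_once f"
    using g
  proof (cases rule: good_cases)
    case (1 c) then show ?thesis unfolding linear_read_once_def by blast
  next
    case (2 \<sigma>) then show ?thesis unfolding linear_read_once_def by blast
  next
    case 3 then have "forbidden_restriction f" by (rule forb_forbidden)
    then show ?thesis by blast
  qed
  show ?thesis using lro_chow[of f] forbidden_not_chow[of f] c by blast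
qed


end
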